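(* Let $n\in\mathbb{N}$, $a<b$, and let $f:[a,b]\to\mathbb{R}$ be $(2n-1)$-convex. If $x_1=a$, $x_2,\dots,x_n\in(a,b)$ and $x_{n+1}=b$, then there exists a polynomial $p\in\Pi_{2n-1}$ such that $p(x_i)=f(x_i)$ for $i=1,\dots,n+1$ and $p(x)\ge f(x)$ for all $x\in[a,b]$.
   Context: $\Pi_m$ denotes the set of real polynomials of degree at most $m$. Divided differences are defined recursively by $[x_1;f]:=f(x_1)$ and $[x_1,\dots,x_{m+1};f]:=\frac{[x_2,\dots,x_{m+1};f]-[x_1,\dots,x_m;f]}{x_{m+1}-x_1}$ for pairwise distinct points. For $m\in\mathbb{N}$, a function $f$ on an interval $I$ is called $m$-convex if $[x_1,\dots,x_{m+2};f]\ge 0$ for all pairwise distinct $x_1,\dots,x_{m+2}\in I$. *)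

theory Defs
  imports Complex_Main "HOL-Computational_Algebra.Polynomial"
begin

primrec divdiff :: "(nat \<Rightarrow> real) \<Rightarrow> nat \<Rightarrow> nat \<Rightarrow> (real \<Rightarrow> real) \<Rightarrow> real" where
  "divdiff x i 0 f = f (x i)"
| "divdiff x i (Suc k) f =
     (divdiff x (Suc i) k f - divdiff x i k f) / (x (i + Suc k) - x i)"

definition mconvex :: "nat \<Rightarrow> real set \<Rightarrow> (real \<Rightarrow> real) \<Rightarrow> bool" where
  "mconvex m I f \<longleftrightarrow>
     (\<forall>x::nat \<Rightarrow> real. (\<forall>i\<le>m+1. x i \<in> I) \<and> inj_on x {..m+1} \<longrightarrow> divdiff x 0 (m+1) f \<ge> 0)"

end

theory Submission
  imports Defs
begin


definition EE :: "(real \<Rightarrow> real) \<Rightarrow> real set \<Rightarrow> real" where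
  "EE f A = (\<Sum>u\<in>A. f u / (\<Prod>v\<in>A-{u}. (u - v)))"

lemma prod_diff_nz:
  fixes B :: "real set"
  assumes "finite B" "w \<notin> B"
  shows "(\<Prod>v\<in>B. (w - v)) \<noteq> 0"
  using assms by (auto simp: prod_zero_iff)

lemma EE_insert:
  assumes "finite B" "v \<notin> B"
  shows "EE f (insert v B) = f v / (\<Prod>u\<in>B. (v - u))
     + (\<Sum>w\<in>B. f w / ((w - v) * (\<Prod>u\<in>B-{w}. (w - u))))"
proof -
  have "EE f (insert v B) = f v / (\<Prod>u\<in>insert v B - {v}. (v - u))
     + (\<Sum>w\<in>B. f w / (\<Prod>u\<in>insert v B-{w}. (w - u)))"
    unfolding EE_def using assms by (simp add: sum.insert)
  also have "insert v B - {v} = B" using assms by auto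
  also have "(\<Sum>w\<in>B. f w / (\<Prod>u\<in>insert v B-{w}. (w - u)))
      = (\<Sum>w\<in>B. f w / ((w - v) * (\<Prod>u\<in>B-{w}. (w - u))))"
  proof (rule sum.cong[OF refl])
    fix w assume "w \<in> B"
    then have "insert v B - {w} = insert v (B - {w})" "v \<notin> B - {w}" using assms by auto
    then show "f w / (\<Prod>u\<in>insert v B-{w}. (w - u)) = f w / ((w - v) * (\<Prod>u\<in>B-{w}. (w - u)))"
      using assms by (simp add: prod.insert)
  qed
  finally show ?thesis .
qed

lemma frac_aux0:
  fixes P c a b :: real
  assumes "P \<noteq> 0" "a \<noteq> 0" "b \<noteq> 0"
  shows "c / (a * P) - c / (b * P) = (b - a) * (c / (b * (a * P)))"
  using assms by (simp add: divide_simps) (simp add: algebra_simps)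
lemma fin_aux:
  fixes fu fv Pu Pv S1 S2 S3 u v :: real
  assumes "Pu \<noteq> 0" "Pv \<noteq> 0" "u \<noteq> v" "S1 - S2 = (v - u) * S3"
  shows "fu / ((u - v) * Pu) + (fv / ((v - u) * Pv) + S3) = ((fv / Pv + S1) - (fu / Pu + S2)) / (v - u)"
proof -
  have "v - u \<noteq> 0" "u - v \<noteq> 0" using assms by auto
  have "S1 = S2 + (v - u) * S3" using assms(4) by simp
  then show ?thesis using assms(1-3) \<open>v - u \<noteq> 0\<close> \<open>u - v \<noteq> 0\<close> by (simp add: divide_simps) (simp add: algebra_simps)
qed
lemma frac_aux:
  fixes P c w u v :: real
  assumes "P \<noteq> 0" "w \<noteq> u" "w \<noteq> v"
  shows "c / ((w - v) * P) - c / ((w - u) * P) = (v - u) * (c / ((w - u) * ((w - v) * P)))"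
  using frac_aux0[of P "w - v" "w - u" c] assms by simp

lemma EE_split:
  assumes "finite B" "u \<notin> B" "v \<notin> B" "u \<noteq> v"
  shows "EE f (insert u (insert v B)) = (EE f (insert v B) - EE f (insert u B)) / (v - u)"
proof -
  have fin: "finite (insert v B)" using assms by simp
  have e1: "EE f (insert u (insert v B)) = f u / (\<Prod>w\<in>insert v B. (u - w))
     + (f v / ((v - u) * (\<Prod>w\<in>B. (v - w)))
     + (\<Sum>w\<in>B. f w / ((w - u) * ((w - v) * (\<Prod>x\<in>B-{w}. (w - x))))))"
  proof -
    have "EE f (insert u (insert v B)) = f u / (\<Prod>w\<in>insert v B. (u - w))
     + (\<Sum>w\<in>insert v B. f w / ((w - u) * (\<Prod>x\<in>insert v B-{w}. (w - x))))"
      using EE_insert[OF fin, of u f] assms by simp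
    also have "(\<Sum>w\<in>insert v B. f w / ((w - u) * (\<Prod>x\<in>insert v B-{w}. (w - x))))
       = f v / ((v - u) * (\<Prod>x\<in>B. (v - x))) + (\<Sum>w\<in>B. f w / ((w - u) * (\<Prod>x\<in>insert v B-{w}. (w - x))))"
      using assms by (simp add: sum.insert)
    also have "(\<Sum>w\<in>B. f w / ((w - u) * (\<Prod>x\<in>insert v B-{w}. (w - x))))
       = (\<Sum>w\<in>B. f w / ((w - u) * ((w - v) * (\<Prod>x\<in>B-{w}. (w - x)))))"
    proof (rule sum.cong[OF refl])
      fix w assume "w \<in> B"
      then have "insert v B - {w} = insert v (B - {w})" "v \<notin> B - {w}" using assms by auto
      then show "f w / ((w - u) * (\<Prod>x\<in>insert v B-{w}. (w - x))) = f w / ((w - u) * ((w - v) * (\<Prod>x\<in>B-{w}. (w - x))))"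
        using assms by (simp add: prod.insert)
    qed
    finally show ?thesis .
  qed
  have e2: "EE f (insert v B) = f v / (\<Prod>w\<in>B. (v - w))
     + (\<Sum>w\<in>B. f w / ((w - v) * (\<Prod>x\<in>B-{w}. (w - x))))" using EE_insert assms by blast
  have e3: "EE f (insert u B) = f u / (\<Prod>w\<in>B. (u - w))
     + (\<Sum>w\<in>B. f w / ((w - u) * (\<Prod>x\<in>B-{w}. (w - x))))" using EE_insert assms by blast
  have pu: "(\<Prod>w\<in>insert v B. (u - w)) = (u - v) * (\<Prod>w\<in>B. (u - w))" using assms by (simp add: prod.insert)
  have nzu: "(\<Prod>w\<in>B. (u - w)) \<noteq> 0" "(\<Prod>w\<in>B. (v - w)) \<noteq> 0" using prod_diff_nz assms by auto
  have sums: "(\<Sum>w\<in>B. f w / ((w - v) * (\<Prod>x\<in>B-{w}. (w - x)))) - (\<Sum>w\<in>B. f w / ((w - u) * (\<Prod>x\<in>B-{w}. (w - x))))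
     = (v - u) * (\<Sum>w\<in>B. f w / ((w - u) * ((w - v) * (\<Prod>x\<in>B-{w}. (w - x)))))"
    unfolding sum_subtractf[symmetric] sum_distrib_left
  proof (rule sum.cong[OF refl])
    fix w assume w: "w \<in> B"
    then have "(\<Prod>x\<in>B-{w}. (w - x)) \<noteq> 0" using prod_diff_nz[of "B-{w}" w] assms by auto
    moreover have "w \<noteq> u" "w \<noteq> v" using w assms by auto
    ultimately show "f w / ((w - v) * (\<Prod>x\<in>B-{w}. (w - x))) - f w / ((w - u) * (\<Prod>x\<in>B-{w}. (w - x))) =
         (v - u) * (f w / ((w - u) * ((w - v) * (\<Prod>x\<in>B-{w}. (w - x)))))"
      using frac_aux by blast
  qed
  have "u - v \<noteq> 0" "v - u \<noteq> 0" using assms by auto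
  show ?thesis unfolding e1 e2 e3 pu
    by (rule fin_aux[OF nzu assms(4) sums])
qed

lemma divdiff_EE:
  assumes "inj_on x {i..i+k}"
  shows "divdiff x i k f = EE f (x ` {i..i+k})"
  using assms
proof (induction k arbitrary: i)
  case 0
  then show ?case by (simp add: EE_def)
next
  case (Suc k)
  define B where "B = x ` {Suc i..i+k}"
  have i1: "inj_on x {Suc i..Suc i+k}" using Suc.prems by (rule inj_on_subset) auto
  have i2: "inj_on x {i..i+k}" using Suc.prems by (rule inj_on_subset) auto
  have s1: "x ` {Suc i..Suc i + k} = insert (x (i + Suc k)) B"
    unfolding B_def by (auto simp: image_iff) (metis atLeastAtMost_iff le_antisym not_less_eq_eq add_Suc_right add_Suc)
  have s2: "x ` {i..i + k} = insert (x i) B"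
    unfolding B_def by (auto simp: image_iff) (metis atLeastAtMost_iff le_antisym not_less_eq_eq)
  have s3: "x ` {i..i + Suc k} = insert (x i) (insert (x (i + Suc k)) B)"
    unfolding B_def by (auto simp: image_iff) (metis atLeastAtMost_iff le_antisym not_less_eq_eq add_Suc_right)
  have nu: "x i \<notin> B" "x (i + Suc k) \<notin> B" "x i \<noteq> x (i + Suc k)"
    using Suc.prems unfolding B_def inj_on_def by (auto, force+)
  show ?case
    using Suc.IH[OF i1] Suc.IH[OF i2] s1 s2 s3 nu EE_split[of B "x i" "x (i + Suc k)" f]
    by (simp add: B_def)
qed

lemma mconvex_EE:
  assumes "mconvex m I f" "A \<subseteq> I" "card A = m + 2"
  shows "EE f A \<ge> 0"
proof -
  have fin: "finite A" using assms(3) card.infinite by fastforce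
  obtain h where h: "bij_betw h {0..<card A} A" using ex_bij_betw_nat_finite[OF fin] by blast
  have eq: "{0..<card A} = {..m+1}" "{0..0+(m+1)} = {..m+1}" using assms(3) by auto
  have "inj_on h {..m+1}" "h ` {..m+1} = A" using h eq unfolding bij_betw_def by auto
  moreover have "\<forall>i\<le>m+1. h i \<in> I" using calculation assms(2) by auto
  ultimately have "divdiff h 0 (m+1) f \<ge> 0" using assms(1) unfolding mconvex_def by blast
  moreover have "divdiff h 0 (m+1) f = EE f A"
    using divdiff_EE[of h 0 "m+1" f] \<open>inj_on h {..m+1}\<close> \<open>h ` {..m+1} = A\<close> eq(2) by simp
  ultimately show ?thesis by simp
qed



definition lagb :: "real set \<Rightarrow> real \<Rightarrow> real \<Rightarrow> real" where
  "lagb A w t = (\<Prod>v\<in>A-{w}. (t - v)) / (\<Prod>v\<in>A-{w}. (w - v))"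

definition lag :: "real set \<Rightarrow> (real \<Rightarrow> real) \<Rightarrow> real poly" where
  "lag A g = (\<Sum>w\<in>A. smult (g w / (\<Prod>v\<in>A-{w}. (w - v))) (\<Prod>v\<in>A-{w}. [:-v, 1:]))"

lemma poly_lag: "poly (lag A g) t = (\<Sum>w\<in>A. g w * lagb A w t)"
  unfolding lag_def lagb_def by (simp add: poly_sum poly_prod)

lemma lagb_self: "finite A \<Longrightarrow> w \<in> A \<Longrightarrow> lagb A w w = 1"
  unfolding lagb_def using prod_diff_nz[of "A-{w}" w] by simp

lemma lagb_other: "finite A \<Longrightarrow> w \<in> A \<Longrightarrow> u \<in> A \<Longrightarrow> u \<noteq> w \<Longrightarrow> lagb A w u = 0"
  unfolding lagb_def by (simp add: prod_zero_iff)

lemma lag_interp: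
  assumes "finite A" "u \<in> A"
  shows "poly (lag A g) u = g u"
proof -
  have "(\<Sum>w\<in>A. g w * lagb A w u) = g u * lagb A u u"
  proof -
    have "(\<Sum>w\<in>A. g w * lagb A w u) = g u * lagb A u u + (\<Sum>w\<in>A-{u}. g w * lagb A w u)"
      using assms by (simp add: sum.remove)
    moreover have "(\<Sum>w\<in>A-{u}. g w * lagb A w u) = 0"
      using assms by (intro sum.neutral) (auto simp: lagb_other)
    ultimately show ?thesis by simp
  qed
  then show ?thesis using assms by (simp add: poly_lag lagb_self)
qed

lemma lag_degree:
  assumes "finite A"
  shows "degree (lag A g) \<le> card A - 1"
  unfolding lag_def
proof (rule degree_sum_le[OF assms])
  fix w assume "w \<in> A"
  have "degree (\<Prod>v\<in>A-{w}. [:-v, 1:]) \<le> (\<Sum>v\<in>A-{w}. degree [:-v, 1:])"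
    using degree_prod_sum_le[of "A-{w}" "\<lambda>v. [:-v, 1:]"] assms by (simp add: o_def)
  also have "\<dots> = card A - 1" using assms \<open>w \<in> A\<close> by simp
  finally show "degree (smult (g w / (\<Prod>v\<in>A-{w}. (w - v))) (\<Prod>v\<in>A-{w}. [:-v, 1:])) \<le> card A - 1"
    by (meson degree_smult_le order_trans)
qed

lemma lag_unique:
  assumes "finite A" "degree q < card A"
  shows "lag A (poly q) = q"
proof (rule poly_eqI_degree[of A])
  show "\<And>x. x \<in> A \<Longrightarrow> poly (lag A (poly q)) x = poly q x" using lag_interp assms by blast
  have "card A > 0" using assms by simp
  then show "degree (lag A (poly q)) < card A" using lag_degree[OF assms(1)] by (meson diff_less le_less_trans zero_less_one)
qed (use assms in auto)


lemma om_aux: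
  fixes c P Q t w :: real
  assumes "w - t \<noteq> 0"
  shows "c / ((w - t) * P) * ((t - w) * Q) = - (c * (Q / P))"
proof (cases "P = 0")
  case False
  then show ?thesis using assms by (simp add: divide_simps) (simp add: algebra_simps)
qed simp

lemma EE_error:
  assumes "finite N" "t \<notin> N"
  shows "f t - poly (lag N f) t = EE f (insert t N) * (\<Prod>v\<in>N. (t - v))"
proof -
  define Om where "Om = (\<Prod>v\<in>N. (t - v))"
  have Om: "Om \<noteq> 0" unfolding Om_def using prod_diff_nz assms by blast
  have "EE f (insert t N) * Om = f t + (\<Sum>w\<in>N. f w / ((w - t) * (\<Prod>u\<in>N-{w}. (w - u))) * Om)"
    using EE_insert[OF assms, of f] Om by (simp add: algebra_simps sum_distrib_left Om_def)
  also have "(\<Sum>w\<in>N. f w / ((w - t) * (\<Prod>u\<in>N-{w}. (w - u))) * Om) = (\<Sum>w\<in>N. - (f w * lagb N w t))"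
  proof (rule sum.cong[OF refl])
    fix w assume w: "w \<in> N"
    have om_eq: "Om = (t - w) * (\<Prod>u\<in>N-{w}. (t - u))" unfolding Om_def using w assms(1) by (simp add: prod.remove)
    moreover have "w - t \<noteq> 0" using w assms by auto
    show "f w / ((w - t) * (\<Prod>u\<in>N-{w}. (w - u))) * Om = - (f w * lagb N w t)"
      unfolding lagb_def om_eq by (rule om_aux) fact
  qed
  finally show ?thesis by (simp add: poly_lag sum_negf Om_def)
qed


lemma single_move:
  assumes conv: "mconvex m {a..b} f" and fin: "finite P" and card: "card P = m"
    and uv: "u \<le> v" "u \<notin> P" "v \<notin> P" and sub: "P \<subseteq> {a..b}" "u \<in> {a..b}" "v \<in> {a..b}"
  shows "EE f (insert u P) \<le> EE f (insert v P)"
proof (cases "u = v")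
  case False
  then have "u < v" using uv by simp
  have "EE f (insert u (insert v P)) \<ge> 0"
    using mconvex_EE[OF conv, of "insert u (insert v P)"] sub fin card uv False by simp
  moreover have "EE f (insert v P) - EE f (insert u P) = (v - u) * EE f (insert u (insert v P))"
    using EE_split[OF fin uv(2,3) False, of f] \<open>u < v\<close> by simp
  ultimately have "EE f (insert v P) - EE f (insert u P) \<ge> 0" using \<open>u < v\<close> by simp
  then show ?thesis by simp
qed simp

lemma multi_move:
  assumes conv: "mconvex m {a..b} f" and finZ: "finite Z"
  shows "finite W \<Longrightarrow> (\<forall>v\<in>Z. y v \<in> J v \<and> y' v \<in> J v \<and> y v \<le> y' v) \<Longrightarrow> (\<forall>v\<in>Z. J v \<inter> W = {})
    \<Longrightarrow> (\<forall>v\<in>Z. \<forall>w\<in>Z. v \<noteq> w \<longrightarrow> J v \<inter> J w = {}) \<Longrightarrow> W \<subseteq> {a..b} \<Longrightarrow> (\<forall>v\<in>Z. J v \<subseteq> {a..b})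
    \<Longrightarrow> card W + card Z = m + 1 \<Longrightarrow> EE f (W \<union> y ` Z) \<le> EE f (W \<union> y' ` Z)"
  using finZ
proof (induction Z arbitrary: W rule: finite_induct)
  case empty
  then show ?case by simp
next
  case (insert v Z)
  define P where "P = W \<union> y ` Z"
  have yinj: "inj_on y Z" using insert.prems(2,4) unfolding inj_on_def by (metis disjoint_iff insert_iff)
  have PW: "W \<inter> y ` Z = {}" using insert.prems(2,3) by fastforce
  have finP: "finite P" unfolding P_def using insert by simp
  have cardP: "card P = m" unfolding P_def using insert.prems(7) insert.hyps card_Un_disjoint[OF insert.prems(1) _ PW] yinj
    by (simp add: card_image)
  have Jv: "J v \<inter> P = {}" unfolding P_def using insert.prems(2,3,4) insert.hyps by auto (metis disjoint_iff)
  have yv: "y v \<notin> P" "y' v \<notin> P" using Jv insert.prems(2) by auto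
  have "y ` Z \<subseteq> {a..b}"
  proof
    fix z assume "z \<in> y ` Z"
    then obtain x where "x \<in> Z" "z = y x" by blast
    then have "y x \<in> J x" "J x \<subseteq> {a..b}" using insert.prems(2,6) by auto
    then show "z \<in> {a..b}" using \<open>z = y x\<close> by blast
  qed
  then have Psub: "P \<subseteq> {a..b}" unfolding P_def using insert.prems(5) by auto
  have "EE f (W \<union> y ` insert v Z) = EE f (insert (y v) P)" unfolding P_def by simp
  also have "\<dots> \<le> EE f (insert (y' v) P)"
    by (rule single_move[OF conv finP cardP]) (use insert.prems(2,6) yv Psub in auto)
  also have "insert (y' v) P = insert (y' v) W \<union> y ` Z" unfolding P_def by simp
  also have "EE f \<dots> \<le> EE f (insert (y' v) W \<union> y' ` Z)"
  proof (rule insert.IH)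
    have "y' v \<notin> W" using insert.prems(2,3) by auto
    then show "card (insert (y' v) W) + card Z = m + 1" using insert.prems(1,7) insert.hyps by simp
    show "\<forall>u\<in>Z. J u \<inter> insert (y' v) W = {}" using insert.prems(2,3,4) insert.hyps by auto
  qed (use insert.prems in auto)
  also have "insert (y' v) W \<union> y' ` Z = W \<union> y' ` insert v Z" by simp
  finally show ?case .
qed



lemma core:
  fixes n :: nat and a b :: real and f :: "real \<Rightarrow> real" and Z :: "real set"
  assumes n1: "n \<ge> 1" and ab: "a < b" and conv: "mconvex (2*n - 1) {a..b} f"
    and finZ: "finite Z" and cardZ: "card Z = n - 1" and Zsub: "Z \<subseteq> {a<..<b}"
  shows "\<exists>p. degree p \<le> 2*n - 1 \<and> poly p a = f a \<and> poly p b = f b \<and> (\<forall>z\<in>Z. poly p z = f z)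
           \<and> (\<forall>t\<in>{a..b}. poly p t \<ge> f t)"
proof -
  define m where "m = 2*n - 1"
  have m1: "m + 1 = 2*n" and m2: "m + 2 = 2*n + 1" using n1 unfolding m_def by auto
  have Epos: "EE f A \<ge> 0" if "A \<subseteq> {a..b}" "card A = 2*n + 1" for A
    using mconvex_EE[of m "{a..b}" f A] conv that m2 unfolding m_def by simp
  define F where "F = insert a (insert b Z)"
  have abZ: "a \<notin> Z" "b \<notin> Z" using Zsub by auto
  have finF: "finite F" unfolding F_def using finZ by simp
  have cardF: "card F = n + 1" unfolding F_def using abZ ab finZ cardZ n1 by simp
  have Fsub: "F \<subseteq> {a..b}" unfolding F_def using Zsub ab by auto
  have "infinite ({a<..<b} - F)" using ab finF by (simp add: Diff_infinite_finite)
  then obtain S where finS: "finite S" and cardS: "card S = 2*n" and Ssub: "S \<subseteq> {a<..<b} - F"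
    using infinite_arbitrarily_large by blast
  define G where "G = F \<union> S"
  have finG: "finite G" unfolding G_def using finF finS by simp
  obtain \<delta> :: real where dpos: "\<delta> > 0" and sep: "\<And>u v. u \<in> G \<Longrightarrow> v \<in> G \<Longrightarrow> u \<noteq> v \<Longrightarrow> 3 * \<delta> < \<bar>u - v\<bar>"
  proof -
    define D where "D = (\<lambda>(u,v). \<bar>u - v\<bar>) ` ((G \<times> G) \<inter> {(u,v). u \<noteq> v})"
    have finD: "finite D" unfolding D_def using finG by simp
    have "a \<in> G" "b \<in> G" unfolding G_def F_def by auto
    then have "\<bar>a - b\<bar> \<in> D" unfolding D_def using ab by (auto simp: image_iff intro!: bexI[of _ "(a,b)"])
    then have neD: "D \<noteq> {}" by auto
    have Dpos: "\<forall>d\<in>D. d > 0" unfolding D_def by auto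
    have "Min D > 0" using Min_in[OF finD neD] Dpos by blast
    moreover have "3 * (Min D / 4) < \<bar>u - v\<bar>" if "u \<in> G" "v \<in> G" "u \<noteq> v" for u v
    proof -
      have "\<bar>u - v\<bar> \<in> D" unfolding D_def using that by (auto simp: image_iff intro!: bexI[of _ "(u,v)"])
      then have "Min D \<le> \<bar>u - v\<bar>" using finD by simp
      then show ?thesis using \<open>Min D > 0\<close> by simp
    qed
    ultimately show ?thesis using that[of "Min D / 4"] by simp
  qed
  have ZG: "Z \<subseteq> G" "F \<subseteq> G" "S \<subseteq> G" "a \<in> G" "b \<in> G" unfolding G_def F_def by auto
  have zab: "a + 3 * \<delta> < z" "z + 3 * \<delta> < b" if "z \<in> Z" for z
  proof -
    have "z \<noteq> a" "z \<noteq> b" "a < z" "z < b" using that Zsub by auto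
    then show "a + 3 * \<delta> < z" "z + 3 * \<delta> < b" using sep[of z a] sep[of z b] ZG that by auto
  qed
  define Y where "Y h = (\<lambda>z. z + h) ` Z" for h :: real
  define N where "N h = F \<union> Y h" for h
  have YG: "Y h \<inter> G = {}" if "0 < h" "h \<le> \<delta>" for h
  proof (rule ccontr)
    assume "Y h \<inter> G \<noteq> {}"
    then obtain z where z: "z \<in> Z" "z + h \<in> G" unfolding Y_def by auto
    then have "z \<noteq> z + h" using that by simp
    then have "3 * \<delta> < \<bar>z - (z + h)\<bar>" using sep[of z "z+h"] z ZG by auto
    then show False using that dpos by simp
  qed
  have cardY: "card (Y h) = n - 1" for h
    unfolding Y_def using cardZ by (simp add: card_image inj_on_def)
  have finY: "finite (Y h)" for h unfolding Y_def using finZ by simp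
  have finN: "finite (N h)" for h unfolding N_def using finF finY by simp
  have cardN: "card (N h) = 2 * n" if "0 < h" "h \<le> \<delta>" for h
  proof -
    have "F \<inter> Y h = {}" using YG[OF that] ZG by blast
    then show ?thesis unfolding N_def using card_Un_disjoint[OF finF finY] cardF cardY n1 by simp
  qed
  have Ysub: "Y h \<subseteq> {a..b}" if "0 < h" "h \<le> \<delta>" for h
    unfolding Y_def using zab that dpos Zsub by (force)
  have Nsub: "N h \<subseteq> {a..b}" if "0 < h" "h \<le> \<delta>" for h
    unfolding N_def using Ysub[OF that] Fsub by blast
  have SN: "S \<inter> N h = {}" if "0 < h" "h \<le> \<delta>" for h
    unfolding N_def using YG[OF that] ZG Ssub by blast
  have prodN: "(\<Prod>v\<in>N h. g v) = g a * g b * (\<Prod>z\<in>Z. g z * g (z + h))" if "0 < h" "h \<le> \<delta>" for h and g :: "real \<Rightarrow> real"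
  proof -
    have d1: "Z \<inter> Y h = {}" using YG[OF that] ZG by blast
    have ab': "a \<notin> Z \<union> Y h" "b \<notin> Z \<union> Y h" using YG[OF that] ZG abZ by auto
    have "N h = insert a (insert b (Z \<union> Y h))" unfolding N_def F_def by auto
    then have "(\<Prod>v\<in>N h. g v) = g a * (g b * ((\<Prod>v\<in>Z. g v) * (\<Prod>v\<in>Y h. g v)))"
      using ab' ab finZ finY prod.union_disjoint[OF finZ finY d1, of g] by simp
    also have "(\<Prod>v\<in>Y h. g v) = (\<Prod>z\<in>Z. g (z + h))" unfolding Y_def
      by (subst prod.reindex) (auto simp: inj_on_def)
    finally show ?thesis by (simp add: prod.distrib)
  qed
  define hs where "hs j = \<delta> / (real j + 2)" for j :: nat
  have hs_pos: "0 < hs j" "hs j \<le> \<delta>" for j unfolding hs_def using dpos by (auto simp: field_simps)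
  have hs_dec: "hs j' \<le> hs j" if "j \<le> j'" for j j'
    unfolding hs_def using dpos that by (intro divide_left_mono) auto
  have hs_lim: "hs \<longlonglongrightarrow> 0"
  proof -
    have "LIM j sequentially. (2 + real j) :> at_top"
      by (rule filterlim_tendsto_add_at_top[OF tendsto_const filterlim_real_sequentially])
    then have "LIM j sequentially. (real j + 2) :> at_infinity"
      by (simp add: add.commute filterlim_at_top_imp_at_infinity)
    then have "(\<lambda>j. \<delta> / (real j + 2)) \<longlonglongrightarrow> 0"
      by (rule tendsto_divide_0[OF tendsto_const])
    then show ?thesis unfolding hs_def by simp
  qed
  define P where "P j = lag (N (hs j)) f" for j
  have degP: "degree (P j) \<le> 2*n - 1" for j
    unfolding P_def using lag_degree[OF finN, of "hs j" f] cardN[OF hs_pos] by simp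
  have P_F: "poly (P j) u = f u" if "u \<in> F" for u j
    unfolding P_def using lag_interp[OF finN] that N_def by auto
  have P_err: "poly (P j) t = f t - EE f (insert t (N (hs j))) * (\<Prod>v\<in>N (hs j). (t - v))"
    if "t \<notin> N (hs j)" for t j
    using EE_error[OF finN that, of f] unfolding P_def by simp
  have conv_e: "convergent (\<lambda>j. EE f (insert c (insert s Z) \<union> Y (hs j)))" if c: "c \<in> {a,b}" and s: "s \<in> S" for c s
  proof -
    define W where "W = insert c (insert s Z)"
    define J where "J z = {z - \<delta>..z + \<delta>} - {z}" for z
    have finW: "finite W" unfolding W_def using finZ by simp
    have WG: "W \<subseteq> G" unfolding W_def using c s ZG by auto
    have Wsub: "W \<subseteq> {a..b}" unfolding W_def using c s Ssub Zsub ab by auto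
    have cs: "c \<notin> Z" "s \<notin> Z" "c \<noteq> s" using c s abZ Ssub unfolding F_def by auto
    have cardW: "card W + card Z = m + 1" unfolding W_def using cs finZ cardZ m1 n1 by simp
    have JW: "\<forall>v\<in>Z. J v \<inter> W = {}"
    proof (intro ballI equalityI subsetI)
      fix v w assume v: "v \<in> Z" and w: "w \<in> J v \<inter> W"
      then have "w \<noteq> v" "\<bar>w - v\<bar> \<le> \<delta>" unfolding J_def by auto
      moreover have "3 * \<delta> < \<bar>w - v\<bar>" using sep[of w v] w WG v ZG \<open>w \<noteq> v\<close> by auto
      ultimately show "w \<in> {}" using dpos by simp
    qed auto
    have JJ: "\<forall>v\<in>Z. \<forall>u\<in>Z. v \<noteq> u \<longrightarrow> J v \<inter> J u = {}"
    proof (intro ballI impI equalityI subsetI)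
      fix v u w assume v: "v \<in> Z" and u: "u \<in> Z" "v \<noteq> u" and w: "w \<in> J v \<inter> J u"
      then have "\<bar>v - u\<bar> \<le> 2 * \<delta>" unfolding J_def by auto
      moreover have "3 * \<delta> < \<bar>v - u\<bar>" using sep[of v u] u v ZG by auto
      ultimately show "w \<in> {}" using dpos by simp
    qed auto
    have Jsub: "\<forall>v\<in>Z. J v \<subseteq> {a..b}" unfolding J_def using zab dpos by fastforce
    have mm: "EE f (W \<union> y ` Z) \<le> EE f (W \<union> y' ` Z)"
      if "\<forall>v\<in>Z. y v \<in> J v \<and> y' v \<in> J v \<and> y v \<le> y' v" for y y'
      using multi_move[OF conv[folded m_def] finZ finW that JW JJ Wsub Jsub cardW] .
    have inJ: "z + hs j \<in> J z" "z - \<delta> \<in> J z" for z j unfolding J_def using hs_pos[of j] dpos by auto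
    define e where "e j = EE f (W \<union> Y (hs j))" for j
    have "decseq e" unfolding decseq_def e_def Y_def
    proof (intro allI impI)
      fix j j' :: nat assume "j \<le> j'"
      then show "EE f (W \<union> (\<lambda>z. z + hs j') ` Z) \<le> EE f (W \<union> (\<lambda>z. z + hs j) ` Z)"
        using mm[of "\<lambda>z. z + hs j'" "\<lambda>z. z + hs j"] inJ hs_dec by auto
    qed
    moreover have "\<forall>j. EE f (W \<union> (\<lambda>z. z - \<delta>) ` Z) \<le> e j" unfolding e_def Y_def
    proof
      fix j
      show "EE f (W \<union> (\<lambda>z. z - \<delta>) ` Z) \<le> EE f (W \<union> (\<lambda>z. z + hs j) ` Z)"
        using mm[of "\<lambda>z. z - \<delta>" "\<lambda>z. z + hs j"] inJ hs_pos[of j] dpos by auto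
    qed
    ultimately obtain L where "e \<longlonglongrightarrow> L" using decseq_convergent by blast
    then show ?thesis unfolding e_def W_def convergent_def by blast
  qed
  have conv_P: "convergent (\<lambda>j. poly (P j) s)" if s: "s \<in> S" for s
  proof -
    define B where "B h = insert s Z \<union> Y h" for h
    have eq: "poly (P j) s = f s - (EE f (insert b (insert s Z) \<union> Y (hs j)) - EE f (insert a (insert s Z) \<union> Y (hs j))) / (b - a)
        * ((s - a) * (s - b) * (\<Prod>z\<in>Z. (s - z) * (s - (z + hs j))))" for j
    proof -
      have sN: "s \<notin> N (hs j)" using SN[OF hs_pos] s by blast
      have abB: "a \<notin> B (hs j)" "b \<notin> B (hs j)" "finite (B (hs j))"
        unfolding B_def using YG[OF hs_pos] ZG abZ s Ssub finZ finY unfolding F_def by auto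
      have "insert s (N (hs j)) = insert a (insert b (B (hs j)))" unfolding N_def F_def B_def by auto
      then have "EE f (insert s (N (hs j))) = (EE f (insert b (B (hs j))) - EE f (insert a (B (hs j)))) / (b - a)"
        using EE_split[OF abB(3,1,2), of f] ab by simp
      moreover have "insert b (B (hs j)) = insert b (insert s Z) \<union> Y (hs j)"
        "insert a (B (hs j)) = insert a (insert s Z) \<union> Y (hs j)" unfolding B_def by auto
      ultimately show ?thesis using P_err[OF sN] prodN[OF hs_pos[of j], of "\<lambda>v. s - v"] by simp
    qed
    define ea where "ea j = EE f (insert a (insert s Z) \<union> Y (hs j))" for j
    define eb where "eb j = EE f (insert b (insert s Z) \<union> Y (hs j))" for j
    define om where "om j = (s - a) * (s - b) * (\<Prod>z\<in>Z. (s - z) * (s - (z + hs j)))" for j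
    obtain La Lb where La: "ea \<longlonglongrightarrow> La" and Lb: "eb \<longlonglongrightarrow> Lb"
      using conv_e[OF _ s, of a] conv_e[OF _ s, of b] unfolding convergent_def ea_def eb_def by auto
    have "om \<longlonglongrightarrow> (s - a) * (s - b) * (\<Prod>z\<in>Z. (s - z) * (s - (z + 0)))"
      unfolding om_def by (intro tendsto_intros hs_lim)
    then obtain Lo where Om: "om \<longlonglongrightarrow> Lo" by blast
    have "b - a \<noteq> 0" using ab by simp
    have "(\<lambda>j. f s - (eb j - ea j) / (b - a) * om j) \<longlonglongrightarrow> f s - (Lb - La) / (b - a) * Lo"
      by (intro tendsto_diff tendsto_mult tendsto_divide tendsto_const La Lb Om \<open>b - a \<noteq> 0\<close>)
    moreover have "(\<lambda>j. poly (P j) s) = (\<lambda>j. f s - (eb j - ea j) / (b - a) * om j)"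
      by (rule ext) (simp only: eq ea_def eb_def om_def)
    ultimately have "(\<lambda>j. poly (P j) s) \<longlonglongrightarrow> f s - (Lb - La) / (b - a) * Lo" by simp
    then show ?thesis unfolding convergent_def by blast
  qed
  define L where "L s = lim (\<lambda>j. poly (P j) s)" for s
  have Llim: "(\<lambda>j. poly (P j) s) \<longlonglongrightarrow> L s" if "s \<in> S" for s
    using conv_P[OF that] unfolding L_def by (simp add: convergent_LIMSEQ_iff)
  define p where "p = lag S L"
  have plim: "(\<lambda>j. poly (P j) t) \<longlonglongrightarrow> poly p t" for t
  proof -
    have "poly (P j) t = (\<Sum>w\<in>S. poly (P j) w * lagb S w t)" for j
    proof -
      have "degree (P j) < card S" using degP[of j] cardS n1 by simp
      then have "lag S (poly (P j)) = P j" using lag_unique[OF finS] by blast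
      then show ?thesis using poly_lag[of S "poly (P j)" t] by simp
    qed
    moreover have "(\<lambda>j. \<Sum>w\<in>S. poly (P j) w * lagb S w t) \<longlonglongrightarrow> (\<Sum>w\<in>S. L w * lagb S w t)"
      by (intro tendsto_sum tendsto_mult_right Llim)
    ultimately show ?thesis unfolding p_def poly_lag by simp
  qed
  have degp: "degree p \<le> 2*n - 1" unfolding p_def using lag_degree[OF finS, of L] cardS by simp
  have pF: "poly p u = f u" if "u \<in> F" for u
  proof -
    have "(\<lambda>j. poly (P j) u) \<longlonglongrightarrow> f u" using P_F[OF that] by simp
    then show ?thesis using plim[of u] LIMSEQ_unique by blast
  qed
  have pge: "poly p t \<ge> f t" if t: "t \<in> {a..b}" for t
  proof (cases "t \<in> F")
    case True
    then show ?thesis using pF by simp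
  next
    case False
    then have tz: "t \<noteq> z" if "z \<in> Z" for z using that unfolding F_def by auto
    have "\<forall>z\<in>Z. eventually (\<lambda>j. hs j < \<bar>t - z\<bar>) sequentially"
    proof
      fix z assume "z \<in> Z"
      then have "\<bar>t - z\<bar> > 0" using tz by auto
      then show "eventually (\<lambda>j. hs j < \<bar>t - z\<bar>) sequentially" using order_tendstoD(2)[OF hs_lim] by blast
    qed
    then have ev: "eventually (\<lambda>j. \<forall>z\<in>Z. hs j < \<bar>t - z\<bar>) sequentially"
      by (rule eventually_ball_finite[OF finZ])
    have "eventually (\<lambda>j. f t \<le> poly (P j) t) sequentially"
      using ev
    proof (rule eventually_mono)
      fix j assume hz: "\<forall>z\<in>Z. hs j < \<bar>t - z\<bar>"
      define h where "h = hs j"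
      have tN: "t \<notin> N h"
      proof
        assume "t \<in> N h"
        then have "t \<in> Y h" using False unfolding N_def by blast
        then obtain z where z: "z \<in> Z" "t = z + h" unfolding Y_def by blast
        then have "hs j < \<bar>t - z\<bar>" using hz by blast
        then show False using z hs_pos[of j] unfolding h_def by simp
      qed
      have hp: "0 < h" "h \<le> \<delta>" unfolding h_def using hs_pos by auto
      have "card (insert t (N h)) = 2 * n + 1" using cardN[OF hp] finN[of h] tN by simp
      moreover have "insert t (N h) \<subseteq> {a..b}" using Nsub[OF hp] t by blast
      ultimately have E0: "EE f (insert t (N h)) \<ge> 0" by (rule Epos[rotated])
      have fac: "(t - z) * (t - (z + h)) \<ge> 0" if "z \<in> Z" for z
      proof (cases "t > z")
        case True
        then have "t - z > h" using hz that h_def by auto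
        moreover have "h > 0" unfolding h_def using hs_pos by simp
        ultimately have "t - z > 0" "t - (z + h) > 0" by auto
        then show ?thesis by simp
      next
        case False
        then have "t < z" using tz[OF that] by simp
        moreover have "h > 0" unfolding h_def using hs_pos by simp
        ultimately show ?thesis by (simp add: mult_nonpos_nonpos)
      qed
      have "(\<Prod>z\<in>Z. (t - z) * (t - (z + h))) \<ge> 0" using fac by (intro prod_nonneg) auto
      moreover have "(t - a) * (t - b) \<le> 0" using t by (simp add: mult_nonneg_nonpos)
      ultimately have "(t - a) * (t - b) * (\<Prod>z\<in>Z. (t - z) * (t - (z + h))) \<le> 0"
        by (simp add: mult_nonpos_nonneg)
      then have "(\<Prod>v\<in>N h. (t - v)) \<le> 0" using prodN[OF hp, of "\<lambda>v. t - v"] by simp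
      then have "EE f (insert t (N h)) * (\<Prod>v\<in>N h. (t - v)) \<le> 0" using E0 by (simp add: mult_nonneg_nonpos)
      moreover have "poly (P j) t = f t - EE f (insert t (N h)) * (\<Prod>v\<in>N h. (t - v))"
        using P_err[of t j] tN unfolding h_def by blast
      ultimately show "f t \<le> poly (P j) t" by linarith
    qed
    then show ?thesis by (rule tendsto_le[OF trivial_limit_sequentially plim[of t] tendsto_const])
  qed
  show ?thesis
    using degp pF pge unfolding F_def by (intro exI[of _ p]) auto
qed


theorem corollary3:
  fixes n :: nat and a b :: real and f :: "real \<Rightarrow> real" and x :: "nat \<Rightarrow> real"
  assumes "n \<ge> 1" and "a < b"
    and "mconvex (2*n - 1) {a..b} f"
    and "x 1 = a"
    and "\<forall>i\<in>{2..n}. x i \<in> {a<..<b}"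
    and "x (n+1) = b"
  shows "\<exists>p :: real poly. degree p \<le> 2*n - 1
           \<and> (\<forall>i\<in>{1..n+1}. poly p (x i) = f (x i))
           \<and> (\<forall>t\<in>{a..b}. poly p t \<ge> f t)"
proof -
  define X0 where "X0 = x ` {2..n}"
  have X0sub: "X0 \<subseteq> {a<..<b}" unfolding X0_def using assms(5) by auto
  have finX0: "finite X0" unfolding X0_def by simp
  have cX0: "card X0 \<le> n - 1" unfolding X0_def using card_image_le[of "{2..n}" x] by simp
  have "infinite ({a<..<b} - X0)" using assms(2) finX0 by (simp add: Diff_infinite_finite)
  then obtain B where finB: "finite B" and cardB: "card B = n - 1 - card X0" and Bsub: "B \<subseteq> {a<..<b} - X0"
    using infinite_arbitrarily_large by blast
  define Z where "Z = X0 \<union> B"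
  have finZ: "finite Z" unfolding Z_def using finX0 finB by simp
  have "X0 \<inter> B = {}" using Bsub by blast
  then have cardZ: "card Z = n - 1" unfolding Z_def using card_Un_disjoint[OF finX0 finB] cardB cX0 by simp
  have Zsub: "Z \<subseteq> {a<..<b}" unfolding Z_def using X0sub Bsub by blast
  obtain p where degp: "degree p \<le> 2*n - 1" and pa: "poly p a = f a" and pb: "poly p b = f b"
    and pZ: "\<forall>z\<in>Z. poly p z = f z" and pge: "\<forall>t\<in>{a..b}. poly p t \<ge> f t"
    using core[OF assms(1,2,3) finZ cardZ Zsub] by blast
  have "poly p (x i) = f (x i)" if i: "i \<in> {1..n+1}" for i
  proof -
    consider "i = 1" | "i = n + 1" | "i \<in> {2..n}" using i by fastforce
    then show ?thesis
    proof cases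
      case 1 then show ?thesis using pa assms(4) by simp
    next
      case 2 then show ?thesis using pb assms(6) by simp
    next
      case 3
      then have "x i \<in> Z" unfolding Z_def X0_def by blast
      then show ?thesis using pZ by blast
    qed
  qed
  then show ?thesis using degp pge by blast
qed

end
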